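(* Let $H=H(\mathcal{P})=(V,E)$ be the Hasse diagram of a finite poset $\mathcal{P}$ and $\phi\colon E\to\mathbf{Z}^+$ an edge coloring. Let $I=I(\mathcal{P},\phi)$ be the SM instance produced by $\mathsf{ConstructInstance}(H,\phi)$ (described below). Then all men's preference lists in $I$ have length at most $3$ if and only if $\phi$ is a proper in-coloring, and all women's preference lists in $I$ have length at most $3$ if and only if $\phi$ is a proper out-coloring.
   Context: An edge coloring $\phi$ of a directed graph is a proper in-coloring if any two distinct edges entering the same vertex receive different colors, and a proper out-coloring if any two distinct edges leaving the same vertex receive different colors. Construction $\mathsf{ConstructInstance}(H,\phi)$ with $V=\{1,\dots,p\}$: for each $v$, let $C_v$ be the set of colors of edges incident to $v$ (entering or leaving); if $|C_v|<2$, add colors from $\{1,2\}$ to $C_v$ until $|C_v|=2$. For each $v$ and $c\in C_v$ create a man $m_{c,v}$ and a woman $w_{c,v}$. Fix an arbitrary cyclic ordering of $C_v$ and for $c\in C_v$ let $c^+$, $c^-$ be the next and previous colors. The preference list of $m_{c,v}$ is: $w_{c,v}$, then the women $w_{c,u}$ for all edges $(u,v)\in E$ with $\phi((u,v))=c$ (in some order), then $w_{c^+,v}$. The preference list of $w_{c,v}$ is: $m_{c^-,v}$, then the men $m_{c,y}$ for all edges $(v,y)\in E$ with $\phi((v,y))=c$ (in some order), then $m_{c,v}$. No other pairs are acceptable. *)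

theory Defs
  imports Main
begin

text \<open>Vertices of the poset are 1..p; the poset order is a relation R (pairs (x,y) meaning x \<le> y).\<close>

definition hasse_edges :: "(nat \<times> nat) set \<Rightarrow> (nat \<times> nat) set" where
  "hasse_edges R = {(u, v). (u, v) \<in> R \<and> u \<noteq> v \<and>
      \<not> (\<exists>w. (u, w) \<in> R \<and> (w, v) \<in> R \<and> w \<noteq> u \<and> w \<noteq> v)}"

definition proper_in_coloring :: "(nat \<times> nat) set \<Rightarrow> (nat \<times> nat \<Rightarrow> nat) \<Rightarrow> bool" where
  "proper_in_coloring E \<phi> \<longleftrightarrow>
     (\<forall>e1\<in>E. \<forall>e2\<in>E. e1 \<noteq> e2 \<and> snd e1 = snd e2 \<longrightarrow> \<phi> e1 \<noteq> \<phi> e2)"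

definition proper_out_coloring :: "(nat \<times> nat) set \<Rightarrow> (nat \<times> nat \<Rightarrow> nat) \<Rightarrow> bool" where
  "proper_out_coloring E \<phi> \<longleftrightarrow>
     (\<forall>e1\<in>E. \<forall>e2\<in>E. e1 \<noteq> e2 \<and> fst e1 = fst e2 \<longrightarrow> \<phi> e1 \<noteq> \<phi> e2)"

definition incident_colors :: "(nat \<times> nat) set \<Rightarrow> (nat \<times> nat \<Rightarrow> nat) \<Rightarrow> nat \<Rightarrow> nat set" where
  "incident_colors E \<phi> v = \<phi> ` {e \<in> E. fst e = v \<or> snd e = v}"

definition valid_color_set :: "(nat \<times> nat) set \<Rightarrow> (nat \<times> nat \<Rightarrow> nat) \<Rightarrow> nat \<Rightarrow> nat set \<Rightarrow> bool" where
  "valid_color_set E \<phi> v S \<longleftrightarrow>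
     (let D = incident_colors E \<phi> v in
       (if card D < 2 then D \<subseteq> S \<and> S - D \<subseteq> {1, 2} \<and> card S = 2 else S = D))"

text \<open>succ is a cyclic ordering of the finite set C (c^+ = succ c), pred gives c^-.\<close>
definition cyclic_order_on :: "nat set \<Rightarrow> (nat \<Rightarrow> nat) \<Rightarrow> (nat \<Rightarrow> nat) \<Rightarrow> bool" where
  "cyclic_order_on C succ pred \<longleftrightarrow>
     bij_betw succ C C \<and> (\<forall>c\<in>C. pred (succ c) = c \<and> pred c \<in> C) \<and>
     (\<forall>c\<in>C. \<forall>d\<in>C. \<exists>n. (succ ^^ n) c = d)"

text \<open>Men m_{c,v} and women w_{c,v} are encoded as pairs (c,v).
  prefM (c,v) / prefW (c,v) are the preference lists. The predicate below says that
  (prefM, prefW) is an output of ConstructInstance(H, \<phi>) for H the Hasse diagram of R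
  on V = {1..p}, for some admissible choices of C_v, cyclic orderings and list orders.\<close>
definition construct_instance ::
  "nat \<Rightarrow> (nat \<times> nat) set \<Rightarrow> (nat \<times> nat \<Rightarrow> nat) \<Rightarrow> (nat \<Rightarrow> nat set) \<Rightarrow>
   (nat \<times> nat \<Rightarrow> (nat \<times> nat) list) \<Rightarrow> (nat \<times> nat \<Rightarrow> (nat \<times> nat) list) \<Rightarrow> bool" where
  "construct_instance p E \<phi> C prefM prefW \<longleftrightarrow>
     (\<forall>v\<in>{1..p}. valid_color_set E \<phi> v (C v)) \<and>
     (\<exists>succ pred.
        (\<forall>v\<in>{1..p}. cyclic_order_on (C v) (succ v) (pred v)) \<and>
        (\<forall>v\<in>{1..p}. \<forall>c\<in>C v.
           (\<exists>us. distinct us \<and> set us = {u. (u, v) \<in> E \<and> \<phi> (u, v) = c} \<and>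
              prefM (c, v) = [(c, v)] @ map (\<lambda>u. (c, u)) us @ [(succ v c, v)]) \<and>
           (\<exists>ys. distinct ys \<and> set ys = {y. (v, y) \<in> E \<and> \<phi> (v, y) = c} \<and>
              prefW (c, v) = [(pred v c, v)] @ map (\<lambda>y. (c, y)) ys @ [(c, v)])))"

end

theory Submission
  imports Defs
begin

lemma inc_sub:
  assumes "valid_color_set E \<phi> v S"
  shows "incident_colors E \<phi> v \<subseteq> S"
  using assms unfolding valid_color_set_def Let_def by (auto split: if_splits)

lemma card_le1: "finite A \<Longrightarrow> (card A \<le> 1) = (\<forall>x\<in>A. \<forall>y\<in>A. x = y)"
  using card_le_Suc0_iff_eq by auto

theorem proposition4p1:
  fixes p :: nat and R :: "(nat \<times> nat) set" and \<phi> :: "nat \<times> nat \<Rightarrow> nat"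
    and C :: "nat \<Rightarrow> nat set"
    and prefM prefW :: "nat \<times> nat \<Rightarrow> (nat \<times> nat) list"
  assumes "partial_order_on {1..p} R"
    and "\<forall>e\<in>hasse_edges R. \<phi> e > 0"
    and "construct_instance p (hasse_edges R) \<phi> C prefM prefW"
  shows "((\<forall>v\<in>{1..p}. \<forall>c\<in>C v. length (prefM (c, v)) \<le> 3)
            \<longleftrightarrow> proper_in_coloring (hasse_edges R) \<phi>)
       \<and> ((\<forall>v\<in>{1..p}. \<forall>c\<in>C v. length (prefW (c, v)) \<le> 3)
            \<longleftrightarrow> proper_out_coloring (hasse_edges R) \<phi>)"
proof -
  define E where "E = hasse_edges R"
  have Rsub: "R \<subseteq> {1..p} \<times> {1..p}"
    using assms(1) unfolding partial_order_on_def preorder_on_def refl_on_def by blast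
  have Esub: "E \<subseteq> {1..p} \<times> {1..p}" using Rsub unfolding E_def hasse_edges_def by auto
  have ci: "construct_instance p E \<phi> C prefM prefW" using assms(3) E_def by simp
  have vC: "\<And>v. v \<in> {1..p} \<Longrightarrow> valid_color_set E \<phi> v (C v)"
    using conjunct1[OF ci[unfolded construct_instance_def]] by (rule bspec)
  have ex2: "\<exists>succ pred.
        (\<forall>v\<in>{1..p}. cyclic_order_on (C v) (succ v) (pred v)) \<and>
        (\<forall>v\<in>{1..p}. \<forall>c\<in>C v.
           (\<exists>us. distinct us \<and> set us = {u. (u, v) \<in> E \<and> \<phi> (u, v) = c} \<and>
              prefM (c, v) = [(c, v)] @ map (\<lambda>u. (c, u)) us @ [(succ v c, v)]) \<and>
           (\<exists>ys. distinct ys \<and> set ys = {y. (v, y) \<in> E \<and> \<phi> (v, y) = c} \<and>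
              prefW (c, v) = [(pred v c, v)] @ map (\<lambda>y. (c, y)) ys @ [(c, v)]))"
    using conjunct2[OF ci[unfolded construct_instance_def]] .
  then obtain succ where "\<exists>pred.
        (\<forall>v\<in>{1..p}. cyclic_order_on (C v) (succ v) (pred v)) \<and>
        (\<forall>v\<in>{1..p}. \<forall>c\<in>C v.
           (\<exists>us. distinct us \<and> set us = {u. (u, v) \<in> E \<and> \<phi> (u, v) = c} \<and>
              prefM (c, v) = [(c, v)] @ map (\<lambda>u. (c, u)) us @ [(succ v c, v)]) \<and>
           (\<exists>ys. distinct ys \<and> set ys = {y. (v, y) \<in> E \<and> \<phi> (v, y) = c} \<and>
              prefW (c, v) = [(pred v c, v)] @ map (\<lambda>y. (c, y)) ys @ [(c, v)]))" ..
  then obtain pred where "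
        (\<forall>v\<in>{1..p}. cyclic_order_on (C v) (succ v) (pred v)) \<and>
        (\<forall>v\<in>{1..p}. \<forall>c\<in>C v.
           (\<exists>us. distinct us \<and> set us = {u. (u, v) \<in> E \<and> \<phi> (u, v) = c} \<and>
              prefM (c, v) = [(c, v)] @ map (\<lambda>u. (c, u)) us @ [(succ v c, v)]) \<and>
           (\<exists>ys. distinct ys \<and> set ys = {y. (v, y) \<in> E \<and> \<phi> (v, y) = c} \<and>
              prefW (c, v) = [(pred v c, v)] @ map (\<lambda>y. (c, y)) ys @ [(c, v)]))" ..
  then have sp: "\<forall>v\<in>{1..p}. \<forall>c\<in>C v.
           (\<exists>us. distinct us \<and> set us = {u. (u, v) \<in> E \<and> \<phi> (u, v) = c} \<and>
              prefM (c, v) = [(c, v)] @ map (\<lambda>u. (c, u)) us @ [(succ v c, v)]) \<and>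
           (\<exists>ys. distinct ys \<and> set ys = {y. (v, y) \<in> E \<and> \<phi> (v, y) = c} \<and>
              prefW (c, v) = [(pred v c, v)] @ map (\<lambda>y. (c, y)) ys @ [(c, v)])" by (rule conjunct2)
  have LM: "length (prefM (c, v)) = card {u. (u, v) \<in> E \<and> \<phi> (u, v) = c} + 2"
    and FM: "finite {u. (u, v) \<in> E \<and> \<phi> (u, v) = c}"
    if vc: "v \<in> {1..p}" "c \<in> C v" for v c
  proof -
    obtain us where "distinct us" "set us = {u. (u, v) \<in> E \<and> \<phi> (u, v) = c}"
      "prefM (c, v) = [(c, v)] @ map (\<lambda>u. (c, u)) us @ [(succ v c, v)]"
      using conjunct1[OF bspec[OF bspec[OF sp vc(1)] vc(2)]] by (elim exE conjE)
    then show "length (prefM (c, v)) = card {u. (u, v) \<in> E \<and> \<phi> (u, v) = c} + 2"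
      "finite {u. (u, v) \<in> E \<and> \<phi> (u, v) = c}"
      using distinct_card[of us] by auto (metis List.finite_set)
  qed
  have LW: "length (prefW (c, v)) = card {y. (v, y) \<in> E \<and> \<phi> (v, y) = c} + 2"
    and FW: "finite {y. (v, y) \<in> E \<and> \<phi> (v, y) = c}"
    if vc: "v \<in> {1..p}" "c \<in> C v" for v c
  proof -
    obtain ys where "distinct ys" "set ys = {y. (v, y) \<in> E \<and> \<phi> (v, y) = c}"
      "prefW (c, v) = [(pred v c, v)] @ map (\<lambda>y. (c, y)) ys @ [(c, v)]"
      using conjunct2[OF bspec[OF bspec[OF sp vc(1)] vc(2)]] by (elim exE conjE)
    then show "length (prefW (c, v)) = card {y. (v, y) \<in> E \<and> \<phi> (v, y) = c} + 2"
      "finite {y. (v, y) \<in> E \<and> \<phi> (v, y) = c}"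
      using distinct_card[of ys] by auto (metis List.finite_set)
  qed
  have inC: "\<phi> (u, v) \<in> C v" if "(u, v) \<in> E" for u v
  proof -
    have "v \<in> {1..p}" using Esub that by auto
    moreover have "\<phi> (u, v) \<in> incident_colors E \<phi> v"
      unfolding incident_colors_def using that by force
    ultimately show ?thesis using inc_sub vC by blast
  qed
  have outC: "\<phi> (v, y) \<in> C v" if "(v, y) \<in> E" for v y
  proof -
    have "v \<in> {1..p}" using Esub that by auto
    moreover have "\<phi> (v, y) \<in> incident_colors E \<phi> v"
      unfolding incident_colors_def using that by force
    ultimately show ?thesis using inc_sub vC by blast
  qed
  have A: "(\<forall>v\<in>{1..p}. \<forall>c\<in>C v. length (prefM (c, v)) \<le> 3)
            \<longleftrightarrow> proper_in_coloring E \<phi>"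
  proof
    assume H: "\<forall>v\<in>{1..p}. \<forall>c\<in>C v. length (prefM (c, v)) \<le> 3"
    show "proper_in_coloring E \<phi>" unfolding proper_in_coloring_def
    proof (intro ballI impI)
      fix e1 e2 assume e: "e1 \<in> E" "e2 \<in> E" "e1 \<noteq> e2 \<and> snd e1 = snd e2"
      obtain u1 v where e1: "e1 = (u1, v)" by (cases e1)
      obtain u2 where e2: "e2 = (u2, v)" using e e1 by (cases e2) auto
      show "\<phi> e1 \<noteq> \<phi> e2"
      proof
        assume eq: "\<phi> e1 = \<phi> e2"
        let ?c = "\<phi> (u1, v)"
        have v: "v \<in> {1..p}" using Esub e e1 by auto
        have c: "?c \<in> C v" using inC e e1 by auto
        have "card {u. (u, v) \<in> E \<and> \<phi> (u, v) = ?c} \<le> 1"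
          using H LM[OF v c] v c by fastforce
        hence "u1 = u2" using card_le1[OF FM[OF v c]] e e1 e2 eq by auto
        thus False using e e1 e2 by auto
      qed
    qed
  next
    assume P: "proper_in_coloring E \<phi>"
    show "\<forall>v\<in>{1..p}. \<forall>c\<in>C v. length (prefM (c, v)) \<le> 3"
    proof (intro ballI)
      fix v c assume v: "v \<in> {1..p}" and c: "c \<in> C v"
      have "\<forall>x\<in>{u. (u, v) \<in> E \<and> \<phi> (u, v) = c}. \<forall>y\<in>{u. (u, v) \<in> E \<and> \<phi> (u, v) = c}. x = y"
        using P unfolding proper_in_coloring_def by fastforce
      hence "card {u. (u, v) \<in> E \<and> \<phi> (u, v) = c} \<le> 1" using card_le1[OF FM[OF v c]] by blast
      thus "length (prefM (c, v)) \<le> 3" using LM[OF v c] by simp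
    qed
  qed
  have B: "(\<forall>v\<in>{1..p}. \<forall>c\<in>C v. length (prefW (c, v)) \<le> 3)
            \<longleftrightarrow> proper_out_coloring E \<phi>"
  proof
    assume H: "\<forall>v\<in>{1..p}. \<forall>c\<in>C v. length (prefW (c, v)) \<le> 3"
    show "proper_out_coloring E \<phi>" unfolding proper_out_coloring_def
    proof (intro ballI impI)
      fix e1 e2 assume e: "e1 \<in> E" "e2 \<in> E" "e1 \<noteq> e2 \<and> fst e1 = fst e2"
      obtain u1 v where e1: "e1 = (v, u1)" by (cases e1)
      obtain u2 where e2: "e2 = (v, u2)" using e e1 by (cases e2) auto
      show "\<phi> e1 \<noteq> \<phi> e2"
      proof
        assume eq: "\<phi> e1 = \<phi> e2"
        let ?c = "\<phi> (v, u1)"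
        have v: "v \<in> {1..p}" using Esub e e1 by auto
        have c: "?c \<in> C v" using outC e e1 by auto
        have "card {y. (v, y) \<in> E \<and> \<phi> (v, y) = ?c} \<le> 1"
          using H LW[OF v c] v c by fastforce
        hence "u1 = u2" using card_le1[OF FW[OF v c]] e e1 e2 eq by auto
        thus False using e e1 e2 by auto
      qed
    qed
  next
    assume P: "proper_out_coloring E \<phi>"
    show "\<forall>v\<in>{1..p}. \<forall>c\<in>C v. length (prefW (c, v)) \<le> 3"
    proof (intro ballI)
      fix v c assume v: "v \<in> {1..p}" and c: "c \<in> C v"
      have "\<forall>x\<in>{y. (v, y) \<in> E \<and> \<phi> (v, y) = c}. \<forall>y\<in>{y. (v, y) \<in> E \<and> \<phi> (v, y) = c}. x = y"
        using P unfolding proper_out_coloring_def by fastforce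
      hence "card {y. (v, y) \<in> E \<and> \<phi> (v, y) = c} \<le> 1" using card_le1[OF FW[OF v c]] by blast
      thus "length (prefW (c, v)) \<le> 3" using LW[OF v c] by simp
    qed
  qed
  show ?thesis using A B unfolding E_def by blast
qed

end
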